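(* Let $k\geq 3$ and let $n$ be such that $\frac{n}{k-1}$ is an integer at least $3$. Then $\rho(\mathcal{F}_1)<\rho(\mathcal{F})$.
   Context: Hypergraphs are simple, undirected, $k$-uniform (every edge has exactly $k$ vertices). The adjacency matrix has $(\mathcal{A}_{\mathcal{G}})_{ij}=\sum_{e\in E,\ i,j\in e}\frac{1}{|e|-1}$ for $i\neq j$ and zero diagonal, and $\rho(\mathcal{G})$ is its spectral radius. Let $\mathbb{C}$ be the $k$-uniform 2-hypercycle consisting of two edges $e_1,e_2$ with $e_1\cap e_2=\{v_1,v_2\}$, i.e. $e_i=\{v_1,v_{a(i,1)},\dots,v_{a(i,k-2)},v_2\}$ ($i=1,2$), all listed vertices distinct. Attaching a pendant edge at a vertex $v$ means adding a new edge consisting of $v$ and $k-1$ new vertices. $\mathcal{F}$ is the hypergraph of order $n$ obtained from $\mathbb{C}$ by attaching $\frac{n}{k-1}-3$ pendant edges at $v_1$ and one pendant edge at $v_2$. $\mathcal{F}_1$ is the hypergraph of order $n$ obtained from $\mathbb{C}$ by attaching $\frac{n}{k-1}-2$ pendant edges at a vertex $\eta\in e_2\setminus\{v_1,v_2\}$. *)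

theory Defs
  imports Complex_Main
begin

text \<open>A hypergraph is given by its edge set; its vertex set is the union of its edges
(the hypergraphs considered here have no isolated vertices).\<close>

definition hverts :: "'a set set \<Rightarrow> 'a set" where
  "hverts E = \<Union>E"

definition hadj :: "'a set set \<Rightarrow> 'a \<Rightarrow> 'a \<Rightarrow> real" where
  "hadj E i j = (if i = j then 0
     else (\<Sum>e\<in>{e\<in>E. i \<in> e \<and> j \<in> e}. 1 / (real (card e) - 1)))"

definition heigenvalue :: "'a set set \<Rightarrow> complex \<Rightarrow> bool" where
  "heigenvalue E mu \<longleftrightarrow> (\<exists>x :: 'a \<Rightarrow> complex. (\<exists>i\<in>hverts E. x i \<noteq> 0) \<and>
      (\<forall>i\<in>hverts E. (\<Sum>j\<in>hverts E. complex_of_real (hadj E i j) * x j) = mu * x i))"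

definition hspec_rad :: "'a set set \<Rightarrow> real" where
  "hspec_rad E = Sup {cmod mu | mu. heigenvalue E mu}"

text \<open>Vertices are pairs of naturals. v1 = (0,0), v2 = (0,1).
 The 2-hypercycle C has edges e_i = {v1, v2} \<union> {(i,j) | 1 \<le> j \<le> k-2}, i = 1,2.
 A pendant edge with index i \<ge> 3 at vertex v is {v} \<union> {(i,j) | 1 \<le> j \<le> k-1}.\<close>

definition core_edge :: "nat \<Rightarrow> nat \<Rightarrow> (nat \<times> nat) set" where
  "core_edge k i = {(0,0), (0,1)} \<union> {(i, j) | j. 1 \<le> j \<and> j \<le> k - 2}"

definition pendant_edge :: "nat \<Rightarrow> nat \<times> nat \<Rightarrow> nat \<Rightarrow> (nat \<times> nat) set" where
  "pendant_edge k v i = insert v {(i, j) | j. 1 \<le> j \<and> j \<le> k - 1}"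

definition hypercycle2 :: "nat \<Rightarrow> (nat \<times> nat) set set" where
  "hypercycle2 k = {core_edge k 1, core_edge k 2}"

definition hyperF :: "nat \<Rightarrow> nat \<Rightarrow> (nat \<times> nat) set set" where
  "hyperF k n = (let m = n div (k - 1) in
     hypercycle2 k \<union> pendant_edge k (0,0) ` {3..<m} \<union> {pendant_edge k (0,1) m})"

definition hyperF1 :: "nat \<Rightarrow> nat \<Rightarrow> (nat \<times> nat) set set" where
  "hyperF1 k n = (let m = n div (k - 1) in
     hypercycle2 k \<union> pendant_edge k (2,1) ` {3..m})"

end

theory Submission
  imports Defs
begin


definition Ynum :: "real \<Rightarrow> real \<Rightarrow> real" where "Ynum A d = (A+d-1)*A*(A+1) - d*(A+1) - 2*(d-1)*A"
definition Knum :: "real \<Rightarrow> real \<Rightarrow> real" where "Knum A d = (A+d-3)*(A+1)*(A+2) - 2*(d-1)*(A+2) - 2*(d-2)*(A+1)"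
definition Gnum :: "real \<Rightarrow> real \<Rightarrow> real" where "Gnum A d = 4*(A+d)^2*A^2*(A+2) + Ynum A d * (-d*(A+1)*(A+2) + 2*(d-1)*A*(A+2) - (d-2)*A*(A+1))"
definition Phinum :: "real \<Rightarrow> real \<Rightarrow> real" where "Phinum A d = Gnum A d * Knum A d - 2*A*(A+1)^2*(A+d)^2*Ynum A d"
definition gnum :: "real \<Rightarrow> real \<Rightarrow> real" where "gnum A d = ((A+d-1)*(A+1) - 2*(d-1))*Ynum A d - 4*A*(A+d)^2"

lemma Ynum_exp2: "Ynum (5/2+u) 2 = (149/8) + (103/4)*u + (19/2)*u^2 + 1*u^3"
  unfolding Ynum_def by algebra

lemma Knum_exp2: "Knum (5/2+u) 2 = (117/8) + (103/4)*u + (19/2)*u^2 + 1*u^3"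
  unfolding Knum_def by algebra

lemma Phinum_exp2: "Phinum (5/2+u) 2 = (993951/128) + (1108197/32)*u + (798545/16)*u^2 + (290769/8)*u^3 + 15420*u^4 + (7983/2)*u^5 + 623*u^6 + 54*u^7 + 2*u^8"
  unfolding Phinum_def Gnum_def Ynum_def Knum_def by algebra

lemma gnum_exp2: "gnum (5/2) 2 = -(371/32)"
  unfolding gnum_def Ynum_def by algebra

lemma Ynum_exp3: "Ynum (27/10+u) (3+e) = (25053/1000) + (89/100)*e + (3307/100)*u + (17/5)*u*e + (111/10)*u^2 + 1*u^2*e + 1*u^3"
  unfolding Ynum_def by algebra

lemma Knum_exp3: "Knum (27/10+u) (3+e) = (20753/1000) + (59/100)*e + (3407/100)*u + (22/5)*u*e + (111/10)*u^2 + 1*u^2*e + 1*u^3"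
  unfolding Knum_def by algebra

lemma Phinum_exp3: "Phinum (27/10+u) (3+e) = (1315426342581/50000000) + (51906786699/5000000)*e + (545720807/500000)*e^2 + (700817/50000)*e^3 + (122868501831/1250000)*u + (22704823089/500000)*u*e + (173868963/25000)*u*e^2 + (71401/200)*u*e^3 + (7636357049/62500)*u^2 + (2696414291/50000)*u^2*e + (7880889/1000)*u^2*e^2 + (19107/50)*u^2*e^3 + (963576073/12500)*u^3 + (30424781/1000)*u^3*e + (96939/25)*u^3*e^2 + (787/5)*u^3*e^3 + (14156837/500)*u^4 + (945413/100)*u^4*e + (9701/10)*u^4*e^2 + 29*u^4*e^3 + (791137/125)*u^5 + (83147/50)*u^5*e + (606/5)*u^5*e^2 + 2*u^5*e^3 + (21256/25)*u^6 + (777/5)*u^6*e + 6*u^6*e^2 + (316/5)*u^7 + 6*u^7*e + 2*u^8"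
  unfolding Phinum_def Gnum_def Ynum_def Knum_def by algebra

lemma gnum_exp3: "gnum (27/10) (3+e) = -(1543233/100000) - (42883/625)*e - (9287/1000)*e^2"
  unfolding gnum_def Ynum_def by algebra

lemma polys_pos:
  assumes "d = 2 \<and> 5/2 \<le> A \<or> 3 \<le> d \<and> 27/10 \<le> A"
  shows "0 < Ynum A d \<and> 0 < Knum A d \<and> 0 < Phinum A d"
  using assms
proof
  assume h: "d = 2 \<and> 5/2 \<le> A"
  define u where "u = A - 5/2"
  have u0: "0 \<le> u" using h u_def by simp
  have A: "A = 5/2 + u" using u_def by simp
  have "0 < Ynum (5/2+u) 2" unfolding Ynum_exp2 using u0
    by (intro add_pos_nonneg mult_nonneg_nonneg zero_le_power) auto
  moreover have "0 < Knum (5/2+u) 2" unfolding Knum_exp2 using u0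
    by (intro add_pos_nonneg mult_nonneg_nonneg zero_le_power) auto
  moreover have "0 < Phinum (5/2+u) 2" unfolding Phinum_exp2 using u0
    by (intro add_pos_nonneg mult_nonneg_nonneg zero_le_power) auto
  ultimately show ?thesis using h A by simp
next
  assume h: "3 \<le> d \<and> 27/10 \<le> A"
  define u where "u = A - 27/10"
  define e where "e = d - 3"
  have u0: "0 \<le> u" "0 \<le> e" using h u_def e_def by simp_all
  have A: "A = 27/10 + u" "d = 3 + e" using u_def e_def by simp_all
  have "0 < Ynum (27/10+u) (3+e)" unfolding Ynum_exp3 using u0
    by (intro add_pos_nonneg mult_nonneg_nonneg zero_le_power) auto
  moreover have "0 < Knum (27/10+u) (3+e)" unfolding Knum_exp3 using u0
    by (intro add_pos_nonneg mult_nonneg_nonneg zero_le_power) auto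
  moreover have "0 < Phinum (27/10+u) (3+e)" unfolding Phinum_exp3 using u0
    by (intro add_pos_nonneg mult_nonneg_nonneg zero_le_power) auto
  ultimately show ?thesis using h A by simp
qed

lemma gnum_neg:
  assumes "d = 2 \<and> A = 5/2 \<or> 3 \<le> d \<and> A = 27/10"
  shows "gnum A d < 0"
  using assms
proof
  assume h: "d = 2 \<and> A = 5/2"
  then have h1: "A = 5/2" and h2: "d = 2" by simp_all
  show ?thesis unfolding h1 h2 gnum_exp2 by simp
next
  assume h: "3 \<le> d \<and> A = 27/10"
  define e where "e = d - 3"
  have e0: "0 \<le> e" using h e_def by simp
  have "gnum (27/10) (3+e) < 0" unfolding gnum_exp3
  proof -
    have "0 \<le> (42883/625)*e" "0 \<le> (9287/1000)*e^2" using e0 by simp_all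
    then show "-(1543233/100000) - (42883/625)*e - (9287/1000)*e^2 < 0" by linarith
  qed
  then have g: "gnum (27/10) d < 0" using e_def by simp
  have hA: "A = 27/10" using h by simp
  show ?thesis unfolding hA by (rule g)
qed



definition fA :: "real \<Rightarrow> real \<Rightarrow> real \<Rightarrow> real" where
 "fA d t A = (A + d - 1 - (t-1)*d/A - 2*(d-1)/(A+1)) * (A + d - 1 - d/A - 2*(d-1)/(A+1)) - (2 + 2*(d-1)/(A+1))^2"

lemma fA_id: assumes Apos: "0 < A" shows "fA d t A = gnum A d / (A*(A+1)^2) - (t-1)*(d/A)*(Ynum A d/(A*(A+1)))"
proof -
  have a1: "A + 1 \<noteq> 0" using Apos by simp
  define Y where "Y = A + d - 1 - d/A - 2*(d-1)/(A+1)"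
  define SP where "SP = A + d - 1 - 2*(d-1)/(A+1)"
  define P where "P = 2*(d-1)/(A+1)"
  have f: "fA d t A = (SP - (t-1)*d/A) * Y - (2+P)^2"
    unfolding fA_def Y_def SP_def P_def by (simp add: algebra_simps)
  have "Y*(A*(A+1)) = (A+d-1)*A*(A+1) - (d/A*A)*(A+1) - (2*(d-1)/(A+1)*(A+1))*A"
    unfolding Y_def by (simp add: algebra_simps)
  also have "\<dots> = Ynum A d" unfolding Ynum_def using Apos a1 by simp
  finally have Yid: "Y * (A*(A+1)) = Ynum A d" .
  have SPid: "SP * (A+1) = (A+d-1)*(A+1) - 2*(d-1)" unfolding SP_def using Apos a1 by (simp add: field_simps)
  have Pid: "(2+P)*(A+1) = 2*(A+d)" unfolding P_def using Apos a1 by (simp add: field_simps)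
  have "gnum A d = (SP*(A+1)) * (Y*(A*(A+1))) - A*((2+P)*(A+1))^2"
    unfolding gnum_def SPid Yid Pid by (simp add: power2_eq_square algebra_simps)
  also have "\<dots> = (A*(A+1)^2) * (SP*Y - (2+P)^2)" by (simp add: power2_eq_square algebra_simps)
  finally have g: "gnum A d / (A*(A+1)^2) = SP*Y - (2+P)^2" using Apos by simp
  have y: "Ynum A d/(A*(A+1)) = Y" using Yid[symmetric] Apos by simp
  show ?thesis unfolding f g y by (simp add: algebra_simps)
qed

lemma fA_cont: assumes "0 < a" shows "continuous_on {a..b} (fA d t)"
  unfolding fA_def using assms by (intro continuous_intros) auto

lemma fA_big: assumes "2 \<le> d" "1 \<le> t" shows "0 < fA d t (t*d+3)"
proof -
  define A where "A = t*d+3"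
  have "1*2 \<le> t*d" using mult_mono[of 1 t 2 d] assms by simp
  then have A5: "5 \<le> A" using A_def by simp
  have Apos: "0 < A" using A5 by simp
  define P where "P = 2*(d-1)/(A+1)"
  have P0: "0 \<le> P" using assms A5 P_def by simp
  have P2: "2*P \<le> d - 1" unfolding P_def using A5 assms mult_nonneg_nonneg[of "A-3" "d-1"] by (simp add: field_simps algebra_simps)
  have h1: "d*1 \<le> d*t" using assms by (intro mult_left_mono) auto
  have "(t-1)*d \<le> A" unfolding A_def using assms by (simp add: algebra_simps)
  moreover have "d \<le> A" using h1 A_def by (simp add: algebra_simps)
  ultimately have "(t-1)*d \<le> A" "d \<le> A" by simp_all
  then have q1: "(t-1)*d/A \<le> 1" and q2: "d/A \<le> 1" using Apos by (simp_all add: divide_le_eq_1_pos)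
  have x: "2 + P < A + d - 1 - (t-1)*d/A - P" using q1 P2 A5 by linarith
  have y: "2 + P < A + d - 1 - d/A - P" using q2 P2 A5 by linarith
  have "(2+P)^2 < (A + d - 1 - (t-1)*d/A - P) * (A + d - 1 - d/A - P)"
    unfolding power2_eq_square using x y P0 by (intro mult_strict_mono) auto
  then show ?thesis unfolding fA_def A_def[symmetric] P_def by simp
qed



lemma mid_lt: "(a::real) < b \<Longrightarrow> a < (a+b)/2 \<and> (a+b)/2 < b" by simp

lemma F1_construct:
  fixes A d t s P Q K G L H :: real
  assumes Apos: "0 < A" and d2: "2 \<le> d" and t1: "1 \<le> t" and key: "H * L < G * K"
    and Kpos: "0 < K" and Gpos: "0 < G" and Lpos: "0 < L" "0 < H"
    and s_def: "s = A + d - 1" and Q_def: "Q = (d-2)/(A+2)" and P_def: "P = 2*(d-1)/(A+1)"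
    and K_def: "K = s - 2 - P - 2*Q" and G_def: "G = s - Q - t*d/A" and L_def: "L = 1 + Q" and H_def: "H = 2 + 2*Q"
  shows "\<exists>c1 c2 h p. 0<c1 \<and> 0<c2 \<and> 0<h \<and> 0<p \<and>
      2 + (d-1)*c1 + (d-2)*c2 + h < s \<and>
      2 + (d-2)*c1 < s*c1 \<and>
      2 + (d-2)*c2 + t*d*p < s*h \<and>
      2 + h + (d-3)*c2 < s*c2 \<and>
      h + (d-1)*p < s*p"
proof -
  have a1: "A + 1 \<noteq> 0" "A + 2 \<noteq> 0" "0 < A + 1" "0 < A + 2" using Apos by simp_all
  have Q0: "0 \<le> Q" unfolding Q_def using d2 a1 by simp
  define h where "h = (H/G + K/L)/2"
  have hG: "H < h*G" and hL: "h*L < K"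
  proof -
    have "H/G < K/L" using key Gpos Lpos by (simp add: field_simps)
    then have "H/G < h \<and> h < K/L" unfolding h_def by (rule mid_lt)
    then show "H < h*G" "h*L < K" using Gpos Lpos by (simp_all add: field_simps)
  qed
  have hpos: "0 < h" unfolding h_def using Gpos Lpos Kpos by (simp add: add_pos_pos)
  define al where "al = (d-1)/(A+1)"
  define be where "be = t*d/A"
  have al0: "0 \<le> al" unfolding al_def using d2 a1 by simp
  have be0: "0 \<le> be" unfolding be_def using d2 t1 Apos by simp
  define cu where "cu = al + Q"
  define ce where "ce = Q + be"
  have cu0: "0 \<le> cu" "0 \<le> ce" unfolding cu_def ce_def using al0 be0 Q0 by simp_all
  define r where "r = min ((K - h*L)/(cu+1)) ((h*G - H)/(ce+1))"
  have rpos: "0 < r" unfolding r_def using hG hL cu0 by simp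
  have r1: "r * cu < K - h*L"
  proof -
    have "r \<le> (K - h*L)/(cu+1)" unfolding r_def by simp
    then have "r * (cu+1) \<le> K - h*L" using cu0 by (simp add: pos_le_divide_eq)
    then show ?thesis using rpos by (simp add: algebra_simps)
  qed
  have r2: "r * ce < h*G - H"
  proof -
    have "r \<le> (h*G - H)/(ce+1)" unfolding r_def by simp
    then have "r * (ce+1) \<le> h*G - H" using cu0 by (simp add: pos_le_divide_eq)
    then show ?thesis using rpos by (simp add: algebra_simps)
  qed
  define c1 where "c1 = (2+r)/(A+1)"
  define c2 where "c2 = (2+h+r)/(A+2)"
  define p where "p = (h+r)/A"
  have c1A: "c1 * (A+1) = 2 + r" unfolding c1_def using a1 by simp
  have c2A: "c2 * (A+2) = 2 + h + r" unfolding c2_def using a1 by simp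
  have pA: "p * A = h + r" unfolding p_def using Apos by simp
  have dc1: "(d-1)*c1 = (2+r)*al" unfolding c1_def al_def by simp
  have dc2: "(d-2)*c2 = (2+h+r)*Q" unfolding c2_def Q_def by simp
  have tdp: "t*d*p = (h+r)*be" unfolding p_def be_def by simp
  have Pal: "P = 2*al" unfolding P_def al_def by simp
  show ?thesis
  proof (intro exI conjI)
    show "0 < c1" "0 < c2" "0 < h" "0 < p"
      unfolding c1_def c2_def p_def using rpos hpos Apos a1 by simp_all
    have "2 + (d-1)*c1 + (d-2)*c2 + h = s - K + h*L + r*cu"
      unfolding dc1 dc2 K_def L_def cu_def Pal by algebra
    then show "2 + (d-1)*c1 + (d-2)*c2 + h < s" using r1 by simp
    have "s*c1 - (d-2)*c1 = c1*(A+1)" unfolding s_def by algebra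
    then show "2 + (d-2)*c1 < s*c1" unfolding c1A using rpos by simp
    have "2 + (d-2)*c2 + t*d*p = H + r*ce + h*(s - G)"
      unfolding dc2 tdp H_def ce_def G_def be_def[symmetric] by algebra
    then show "2 + (d-2)*c2 + t*d*p < s*h" using r2 by (simp add: algebra_simps)
    have "s*c2 - (d-3)*c2 = c2*(A+2)" unfolding s_def by algebra
    then show "2 + h + (d-3)*c2 < s*c2" unfolding c2A using rpos by simp
    have "s*p - (d-1)*p = p*A" unfolding s_def by algebra
    then show "h + (d-1)*p < s*p" unfolding pA using rpos by simp
  qed
qed

lemma numeric:
  fixes d t :: real
  assumes dd: "d = 2 \<or> 3 \<le> d" and t1: "1 \<le> t"
  shows "\<exists>s>0. (\<exists>x1 x2 xc xp xq. x1 \<noteq> 0 \<and>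
      2*x2 + 2*(d-1)*xc + (t-1)*d*xp = s*x1 \<and>
      2*x1 + 2*(d-1)*xc + d*xq = s*x2 \<and>
      x1 + x2 + (d-2)*xc = s*xc \<and>
      x1 + (d-1)*xp = s*xp \<and>
      x2 + (d-1)*xq = s*xq) \<and>
    (\<exists>c1 c2 h p. 0<c1 \<and> 0<c2 \<and> 0<h \<and> 0<p \<and>
      2 + (d-1)*c1 + (d-2)*c2 + h < s \<and>
      2 + (d-2)*c1 < s*c1 \<and>
      2 + (d-2)*c2 + t*d*p < s*h \<and>
      2 + h + (d-3)*c2 < s*c2 \<and>
      h + (d-1)*p < s*p)"
proof -
  have d2: "2 \<le> d" using dd by auto
  define A0 where "A0 = (if d = 2 then 5/2 else 27/10::real)"
  have A0r: "d = 2 \<and> A0 = 5/2 \<or> 3 \<le> d \<and> A0 = 27/10" using dd A0_def by auto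
  have A0pos: "0 < A0" using A0r by auto
  have "fA d t A0 < 0"
  proof -
    have g: "gnum A0 d < 0" using gnum_neg A0r by blast
    have "0 < Ynum A0 d" using polys_pos[of d A0] A0r by auto
    then have "0 \<le> (t-1)*(d/A0)*(Ynum A0 d/(A0*(A0+1)))" using t1 d2 A0pos by simp
    moreover have "gnum A0 d / (A0*(A0+1)^2) < 0" using g A0pos by (simp add: divide_neg_pos)
    ultimately show ?thesis using fA_id[OF A0pos, of d t] by linarith
  qed
  moreover have "0 < fA d t (t*d+3)" using fA_big d2 t1 by blast
  moreover have "A0 \<le> t*d+3"
  proof -
    have "0 \<le> t*d" using d2 t1 by simp
    then show ?thesis using A0r by auto
  qed
  ultimately obtain A where A: "A0 \<le> A" "A \<le> t*d+3" "fA d t A = 0"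
    using IVT'[of "fA d t" A0 0 "t*d+3"] fA_cont[OF A0pos] by auto
  have Ar: "d = 2 \<and> 5/2 \<le> A \<or> 3 \<le> d \<and> 27/10 \<le> A" using A0r A by auto
  have Apos: "0 < A" using A A0pos by simp
  have YKPhi: "0 < Ynum A d" "0 < Knum A d" "0 < Phinum A d" using polys_pos[OF Ar] by auto
  define s where "s = A + d - 1"
  have spos: "0 < s" using s_def Apos d2 by simp
  define P where "P = 2*(d-1)/(A+1)"
  define Q where "Q = (d-2)/(A+2)"
  have P0: "0 \<le> P" "0 \<le> Q" using P_def Q_def d2 Apos by simp_all
  define x1 where "x1 = 2 + P"
  define w where "w = (t-1)*d/A"
  define z where "z = d/A"
  define x2 where "x2 = s - w - P"
  define Y where "Y = s - z - P"
  have rel: "x2 * Y = (2+P)^2" using A(3) unfolding fA_def x2_def Y_def s_def P_def w_def z_def by simp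
  have Yeq: "Y = Ynum A d / (A*(A+1))" unfolding Y_def s_def P_def Ynum_def z_def using Apos
    by (simp add: field_simps)
  have Ypos: "0 < Y" using Yeq YKPhi Apos by simp
  have Fpart: "\<exists>x1 x2 xc xp xq. x1 \<noteq> 0 \<and>
      2*x2 + 2*(d-1)*xc + (t-1)*d*xp = s*x1 \<and>
      2*x1 + 2*(d-1)*xc + d*xq = s*x2 \<and>
      x1 + x2 + (d-2)*xc = s*xc \<and>
      x1 + (d-1)*xp = s*xp \<and>
      x2 + (d-1)*xq = s*xq"
  proof (intro exI conjI)
    show "x1 \<noteq> 0" using x1_def P0 by simp
    have e1: "2*(d-1)*((x1+x2)/(A+1)) = P*(x1+x2)" unfolding P_def by simp
    have e2: "(t-1)*d*(x1/A) = w*x1" unfolding w_def by simp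
    show "2*x2 + 2*(d-1)*((x1+x2)/(A+1)) + (t-1)*d*(x1/A) = s*x1"
      unfolding e1 e2 unfolding x1_def x2_def by (simp add: algebra_simps)
    have e3: "d*(x2/A) = z*x2" unfolding z_def by simp
    have "2*x1 + P*(x1+x2) + z*x2 - s*x2 = (2+P)^2 - x2*Y"
      unfolding Y_def x1_def by (simp add: algebra_simps power2_eq_square)
    then show "2*x1 + 2*(d-1)*((x1+x2)/(A+1)) + d*(x2/A) = s*x2"
      unfolding e1 e3 using rel by simp
    show "x1 + x2 + (d-2)*((x1+x2)/(A+1)) = s*((x1+x2)/(A+1))"
      unfolding s_def using Apos by (simp add: field_simps)
    show "x1 + (d-1)*(x1/A) = s*(x1/A)"
      unfolding s_def using Apos by (simp add: field_simps)
    show "x2 + (d-1)*(x2/A) = s*(x2/A)"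
      unfolding s_def using Apos by (simp add: field_simps)
  qed
  define K where "K = s - 2 - P - 2*Q"
  define G where "G = s - Q - t*d/A"
  define L where "L = 1 + Q"
  define H where "H = 2 + 2*Q"
  have Keq: "K = Knum A d / ((A+1)*(A+2))" unfolding K_def s_def P_def Q_def Knum_def using Apos
    by (simp add: field_simps)
  have Kpos: "0 < K" using Keq YKPhi Apos by simp
  have Lpos: "0 < L" "0 < H" using L_def H_def P0 by simp_all
  have tdw: "t*d/A = w + z" unfolding w_def z_def add_divide_distrib[symmetric] by (simp add: algebra_simps)
  have Gx: "G = x2 - z + P - Q" unfolding G_def x2_def tdw by (simp add: algebra_simps)
  have x2eq: "x2 = (2+P)^2 / Y" using rel Ypos by (simp add: field_simps)
  have Peq: "(2+P) * (A+1) = 2*(A+d)" unfolding P_def using Apos by (simp add: field_simps)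
  have Qeq: "L * (A+2) = A + d" unfolding L_def Q_def using Apos by (simp add: field_simps)
  have GD: "G * (A*(A+1)*(A+2)*Ynum A d) = Gnum A d"
  proof -
    have YA: "Y * (A*(A+1)) = Ynum A d" using Yeq Apos by simp
    have "x2 * Ynum A d = (x2*Y) * (A*(A+1))" unfolding YA[symmetric] by (simp add: mult.assoc)
    then have xY: "x2 * Ynum A d = (2+P)^2 * (A*(A+1))" unfolding rel .
    have "x2 * (A*(A+1)*(A+2)*Ynum A d) = (x2 * Ynum A d) * (A*(A+1)*(A+2))" by algebra
    also have "\<dots> = ((2+P)^2 * (A*(A+1))) * (A*(A+1)*(A+2))" unfolding xY ..
    also have "\<dots> = ((2+P)*(A+1))^2 * (A^2 *(A+2))" by algebra
    finally have "x2 * (A*(A+1)*(A+2)*Ynum A d) = ((2+P)*(A+1))^2 * (A^2 *(A+2))" .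
    also have "... = 4*(A+d)^2*A^2*(A+2)" unfolding Peq by algebra
    finally have a: "x2 * (A*(A+1)*(A+2)*Ynum A d) = 4*(A+d)^2*A^2*(A+2)" .
    have zA: "z*A = d" unfolding z_def using Apos by simp
    have a1: "A + 1 \<noteq> 0" "A + 2 \<noteq> 0" using Apos by simp_all
    have PA: "P*(A+1) = 2*(d-1)" unfolding P_def using a1 by simp
    have QA: "Q*(A+2) = d-2" unfolding Q_def using a1 by simp
    have "(- z + P - Q) * (A*(A+1)*(A+2)) = -(z*A)*(A+1)*(A+2) + (P*(A+1))*A*(A+2) - (Q*(A+2))*A*(A+1)"
      by algebra
    then have b: "(- z + P - Q) * (A*(A+1)*(A+2)) = -d*(A+1)*(A+2) + 2*(d-1)*A*(A+2) - (d-2)*A*(A+1)"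
      unfolding zA PA QA by simp
    have "G * (A*(A+1)*(A+2)*Ynum A d) = x2 * (A*(A+1)*(A+2)*Ynum A d) + ((- z + P - Q) * (A*(A+1)*(A+2))) * Ynum A d"
      unfolding Gx by (simp add: algebra_simps)
    then show ?thesis unfolding a b Gnum_def by simp
  qed
  have KD: "K * ((A+1)*(A+2)) = Knum A d" unfolding Keq using Apos by simp
  have HL: "H = 2*L" unfolding H_def L_def by simp
  have key: "H * L < G * K"
  proof -
    define D where "D = A*(A+1)^2*(A+2)^2*Ynum A d"
    have Dpos: "0 < D" unfolding D_def using Apos YKPhi by simp
    have "(G*K - H*L) * D = Phinum A d"
    proof -
      have e1: "(G*K) * D = (G * (A*(A+1)*(A+2)*Ynum A d)) * (K * ((A+1)*(A+2)))"
        unfolding D_def by algebra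
      have e2: "(H*L)*D = 2 * A*(A+1)^2*(L*(A+2))^2*Ynum A d"
        unfolding D_def HL by algebra
      have "(G*K - H*L) * D = (G*K) * D - (H*L)*D" by algebra
      also have "\<dots> = Gnum A d * Knum A d - 2 * A*(A+1)^2*(A+d)^2*Ynum A d"
        unfolding e1 e2 GD KD Qeq ..
      finally show ?thesis unfolding Phinum_def .
    qed
    then have "0 < (G*K - H*L) * D" using YKPhi by simp
    then have "0 < G*K - H*L" using Dpos by (simp add: zero_less_mult_iff)
    then show ?thesis by simp
  qed
  have Gpos: "0 < G"
  proof (rule ccontr)
    assume "\<not> 0 < G"
    then have "G * K \<le> 0" using Kpos by (simp add: mult_nonpos_nonneg)
    moreover have "0 < H * L" using Lpos by simp
    ultimately show False using key by simp
  qed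
  show ?thesis
    using F1_construct[OF Apos d2 t1 key Kpos Gpos Lpos s_def Q_def P_def K_def G_def L_def H_def] spos Fpart by blast
qed



lemma row_sum:
  fixes x :: "'a \<Rightarrow> 'b::real_field"
  assumes fin: "finite E" and unif: "\<And>e. e \<in> E \<Longrightarrow> finite e \<and> card e = k"
  shows "(\<Sum>j\<in>hverts E. of_real (hadj E i j) * x j) =
         of_real (1/(real k - 1)) * (\<Sum>e\<in>E. if i \<in> e then (\<Sum>j\<in>e. x j) - x i else 0)"
proof -
  let ?c = "1/(real k - 1)"
  have fh: "finite (hverts E)" using fin unif by (auto simp: hverts_def)
  have h: "hadj E i j = (\<Sum>e\<in>E. if i\<in>e \<and> j\<in>e \<and> j\<noteq>i then ?c else 0)" for j
  proof -
    have "(\<Sum>e\<in>{e\<in>E. i \<in> e \<and> j \<in> e}. 1 / (real (card e) - 1)) = (\<Sum>e\<in>{e\<in>E. i \<in> e \<and> j \<in> e}. ?c)"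
      using unif by (intro sum.cong) auto
    also have "\<dots> = (\<Sum>e\<in>E. if i\<in>e \<and> j\<in>e then ?c else 0)" by (rule sum.inter_filter[OF fin])
    finally show ?thesis unfolding hadj_def by auto
  qed
  have "(\<Sum>j\<in>hverts E. of_real (hadj E i j) * x j) =
        (\<Sum>j\<in>hverts E. \<Sum>e\<in>E. if i\<in>e \<and> j\<in>e \<and> j\<noteq>i then of_real ?c * x j else 0)"
    unfolding h of_real_sum sum_distrib_right by (intro sum.cong refl) auto
  also have "\<dots> = (\<Sum>e\<in>E. \<Sum>j\<in>hverts E. if i\<in>e \<and> j\<in>e \<and> j\<noteq>i then of_real ?c * x j else 0)"
    by (rule sum.swap)
  also have "\<dots> = (\<Sum>e\<in>E. of_real ?c * (if i \<in> e then (\<Sum>j\<in>e. x j) - x i else 0))"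
  proof (rule sum.cong[OF refl])
    fix e assume e: "e \<in> E"
    have sub: "e \<subseteq> hverts E" using e by (auto simp: hverts_def)
    have fe: "finite e" using unif e by blast
    show "(\<Sum>j\<in>hverts E. if i\<in>e \<and> j\<in>e \<and> j\<noteq>i then of_real ?c * x j else 0) =
          of_real ?c * (if i \<in> e then (\<Sum>j\<in>e. x j) - x i else 0)"
    proof (cases "i \<in> e")
      case True
      have "(\<Sum>j\<in>hverts E. if i\<in>e \<and> j\<in>e \<and> j\<noteq>i then of_real ?c * x j else 0) =
            (\<Sum>j\<in>hverts E. if j \<in> e - {i} then of_real ?c * x j else 0)"
        using True by (intro sum.cong) auto
      also have "\<dots> = (\<Sum>j\<in>{j\<in>hverts E. j \<in> e - {i}}. of_real ?c * x j)"
        by (rule sum.inter_filter[OF fh, symmetric])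
      also have "{j\<in>hverts E. j \<in> e - {i}} = e - {i}" using sub by auto
      also have "(\<Sum>j\<in>e - {i}. of_real ?c * x j) = of_real ?c * ((\<Sum>j\<in>e. x j) - x i)"
        using fe True by (simp add: sum_distrib_left[symmetric] sum_diff1 algebra_simps sum_divide_distrib[symmetric] diff_divide_distrib)
      finally show ?thesis using True by simp
    qed simp
  qed
  also have "\<dots> = of_real ?c * (\<Sum>e\<in>E. if i \<in> e then (\<Sum>j\<in>e. x j) - x i else 0)"
    by (simp add: sum_distrib_left)
  finally show ?thesis .
qed

lemma hadj_nonneg:
  assumes "\<And>e. e \<in> E \<Longrightarrow> card e = k" and "2 \<le> k"
  shows "0 \<le> hadj E i j"
  unfolding hadj_def using assms by (auto intro!: sum_nonneg)

lemma cw_bound: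
  assumes fin: "finite (hverts E)" and nonneg: "\<And>i j. 0 \<le> hadj E i j"
   and ypos: "\<And>i. i \<in> hverts E \<Longrightarrow> 0 < y i"
   and sup: "\<And>i. i \<in> hverts E \<Longrightarrow> (\<Sum>j\<in>hverts E. hadj E i j * y j) \<le> B * y i"
   and ev: "heigenvalue E mu"
  shows "cmod mu \<le> B"
proof -
  let ?V = "hverts E"
  from ev obtain x where nz: "\<exists>i\<in>?V. x i \<noteq> 0"
    and eq: "\<forall>i\<in>?V. (\<Sum>j\<in>?V. complex_of_real (hadj E i j) * x j) = mu * x i"
    unfolding heigenvalue_def by blast
  let ?r = "\<lambda>i. cmod (x i) / y i"
  have ne: "?V \<noteq> {}" using nz by blast
  have "Max (?r ` ?V) \<in> ?r ` ?V" using fin ne by (intro Max_in) auto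
  then obtain i0 where i0: "i0 \<in> ?V" and i0M: "?r i0 = Max (?r ` ?V)" by auto
  have mx: "?r i \<le> ?r i0" if "i \<in> ?V" for i unfolding i0M using fin that by (intro Max_ge) auto
  obtain i1 where i1: "i1 \<in> ?V" "x i1 \<noteq> 0" using nz by blast
  have "0 < ?r i1" using i1 ypos by simp
  then have cpos: "0 < ?r i0" using mx[OF i1(1)] by linarith
  have y0: "0 < y i0" using ypos i0 by simp
  have xpos: "0 < cmod (x i0)" using cpos y0 by (simp add: zero_less_divide_iff)
  have bnd: "cmod (x j) \<le> ?r i0 * y j" if "j \<in> ?V" for j
  proof -
    have "?r j \<le> ?r i0" using mx that by blast
    then show ?thesis using ypos[OF that] by (simp add: field_simps)
  qed
  have "cmod mu * cmod (x i0) = cmod (\<Sum>j\<in>?V. complex_of_real (hadj E i0 j) * x j)"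
    using eq i0 by (simp add: norm_mult)
  also have "\<dots> \<le> (\<Sum>j\<in>?V. cmod (complex_of_real (hadj E i0 j) * x j))" by (rule norm_sum)
  also have "\<dots> = (\<Sum>j\<in>?V. hadj E i0 j * cmod (x j))" using nonneg by (simp add: norm_mult)
  also have "\<dots> \<le> (\<Sum>j\<in>?V. hadj E i0 j * (?r i0 * y j))"
    using bnd nonneg by (intro sum_mono mult_left_mono) auto
  also have "\<dots> = ?r i0 * (\<Sum>j\<in>?V. hadj E i0 j * y j)" by (simp add: sum_distrib_left algebra_simps)
  also have "\<dots> \<le> ?r i0 * (B * y i0)" using sup[OF i0] cpos by (intro mult_left_mono) auto
  also have "\<dots> = B * cmod (x i0)" using y0 by simp
  finally have "cmod mu * cmod (x i0) \<le> B * cmod (x i0)" .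
  then show ?thesis using xpos by simp
qed

lemma twins_eig:
  assumes fin: "finite (hverts E)" and a: "a \<in> hverts E" and b: "b \<in> hverts E" and ab: "a \<noteq> b"
    and tw: "\<And>e. e \<in> E \<Longrightarrow> (a \<in> e \<longleftrightarrow> b \<in> e)"
  shows "heigenvalue E (- complex_of_real (hadj E a b))"
proof -
  let ?V = "hverts E"
  define x where "x = (\<lambda>j. if j = a then (1::complex) else if j = b then -1 else 0)"
  have sumx: "(\<Sum>j\<in>?V. complex_of_real (hadj E i j) * x j) = complex_of_real (hadj E i a) - complex_of_real (hadj E i b)" for i
  proof -
    have "(\<Sum>j\<in>?V. complex_of_real (hadj E i j) * x j) =
          (\<Sum>j\<in>?V. (if j = a then complex_of_real (hadj E i a) else 0) + (if j = b then - complex_of_real (hadj E i b) else 0))"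
      unfolding x_def using ab by (intro sum.cong) auto
    also have "\<dots> = complex_of_real (hadj E i a) - complex_of_real (hadj E i b)"
      using fin a b by (simp add: sum.distrib)
    finally show ?thesis .
  qed
  have sym: "hadj E a b = hadj E b a" unfolding hadj_def by (auto simp: conj_commute)
  show ?thesis unfolding heigenvalue_def
  proof (intro exI conjI ballI)
    show "\<exists>i\<in>?V. x i \<noteq> 0" using a x_def by auto
    fix i assume i: "i \<in> ?V"
    show "(\<Sum>j\<in>?V. complex_of_real (hadj E i j) * x j) = - complex_of_real (hadj E a b) * x i"
    proof (cases "i = a \<or> i = b")
      case True
      then show ?thesis unfolding sumx using ab sym by (auto simp: x_def hadj_def[of E a a] hadj_def[of E b b])
    next
      case False
      have "{e \<in> E. i \<in> e \<and> a \<in> e} = {e \<in> E. i \<in> e \<and> b \<in> e}" using tw by auto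
      then have "hadj E i a = hadj E i b" using False unfolding hadj_def by auto
      then show ?thesis unfolding sumx using False by (simp add: x_def)
    qed
  qed
qed




lemma mem_core: "(a,b) \<in> core_edge k l \<longleftrightarrow> (a = 0 \<and> b = 0) \<or> (a = 0 \<and> b = 1) \<or> (a = l \<and> 1 \<le> b \<and> b \<le> k-2)"
  by (auto simp: core_edge_def)
lemma mem_pend: "(a,b) \<in> pendant_edge k v l \<longleftrightarrow> (a,b) = v \<or> (a = l \<and> 1 \<le> b \<and> b \<le> k-1)"
  by (auto simp: pendant_edge_def)

lemma core_eq: "l \<noteq> 0 \<Longrightarrow> core_edge k l = insert (0,0) (insert (0,1) (Pair l ` {1..k-2}))"
  by (auto simp: core_edge_def)
lemma pend_eq: "pendant_edge k v l = insert v (Pair l ` {1..k-1})"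
  by (auto simp: pendant_edge_def)

lemma core_fin: "finite (core_edge k l)"
  by (cases "l = 0") (auto simp: core_eq core_edge_def)
lemma pend_fin: "finite (pendant_edge k v l)"
  by (simp add: pend_eq)

lemma core_card: assumes "l \<noteq> 0" "3 \<le> k" shows "card (core_edge k l) = k"
proof -
  have "card (Pair l ` {1..k-2}) = k - 2" by (simp add: card_image inj_on_def)
  then show ?thesis using assms unfolding core_eq[OF assms(1)] by (auto simp: card_insert_if)
qed

lemma pend_card: assumes "fst v \<noteq> l" "2 \<le> k" shows "card (pendant_edge k v l) = k"
proof -
  have "card (Pair l ` {1..k-1}) = k - 1" by (simp add: card_image inj_on_def)
  moreover have "v \<notin> Pair l ` {1..k-1}" using assms by auto
  ultimately show ?thesis using assms unfolding pend_eq by (auto simp: card_insert_if)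
qed

lemma sum_core: assumes "l \<noteq> 0" shows "(\<Sum>j\<in>core_edge k l. x j) = x (0,0) + x (0,1) + (\<Sum>b=1..k-2. x (l,b))"
proof -
  have "(\<Sum>j\<in>Pair l ` {1..k-2}. x j) = (\<Sum>b=1..k-2. x (l,b))" by (simp add: sum.reindex inj_on_def)
  moreover have "(0,0) \<notin> insert (0,1) (Pair l ` {1..k-2})" "(0,1) \<notin> Pair l ` {1..k-2}" using assms by auto
  ultimately show ?thesis unfolding core_eq[OF assms] by (simp add: add.assoc)
qed

lemma sum_pend: assumes "fst v \<noteq> l" shows "(\<Sum>j\<in>pendant_edge k v l. x j) = x v + (\<Sum>b=1..k-1. x (l,b))"
proof -
  have "(\<Sum>j\<in>Pair l ` {1..k-1}. x j) = (\<Sum>b=1..k-1. x (l,b))" by (simp add: sum.reindex inj_on_def)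
  moreover have "v \<notin> Pair l ` {1..k-1}" using assms by auto
  ultimately show ?thesis unfolding pend_eq by simp
qed

lemma sum_const_on: assumes "\<And>b. b \<in> {1..N} \<Longrightarrow> f b = (c::real)" shows "(\<Sum>b=1..N. f b) = real N * c"
  using assms by simp

lemma hyperF_eq: "hyperF k n = insert (core_edge k 1) (insert (core_edge k 2)
   (insert (pendant_edge k (0,1) (n div (k-1))) (pendant_edge k (0,0) ` {3..<n div (k-1)})))"
  unfolding hyperF_def hypercycle2_def Let_def by auto

lemma hyperF_sum:
  assumes k3: "3 \<le> k" and m3: "3 \<le> m" and m: "m = n div (k-1)"
  shows "(\<Sum>e\<in>hyperF k n. g e) = g (core_edge k 1) + g (core_edge k 2) + g (pendant_edge k (0,1) m)
          + (\<Sum>l\<in>{3..<m}. g (pendant_edge k (0,0) l))"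
proof -
  let ?P = "pendant_edge k (0,0) ` {3..<m}"
  have inj: "inj_on (pendant_edge k (0,0)) {3..<m}"
  proof (rule inj_onI)
    fix l l' assume "l \<in> {3..<m}" "l' \<in> {3..<m}" "pendant_edge k (0,0) l = pendant_edge k (0,0) l'"
    moreover have "(l,1) \<in> pendant_edge k (0,0) l" using k3 by (simp add: mem_pend)
    ultimately have "(l,1) \<in> pendant_edge k (0,0) l'" by simp
    then show "l = l'" using \<open>l \<in> {3..<m}\<close> by (simp add: mem_pend)
  qed
  have n1: "core_edge k 1 \<notin> insert (core_edge k 2) (insert (pendant_edge k (0,1) m) ?P)"
  proof -
    have "(1,1) \<in> core_edge k 1" using k3 by (simp add: mem_core)
    moreover have "(1,1) \<notin> core_edge k 2" by (simp add: mem_core)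
    moreover have "(1,1) \<notin> pendant_edge k (0,1) m" using m3 by (simp add: mem_pend)
    moreover have "\<forall>l\<in>{3..<m}. (1,1) \<notin> pendant_edge k (0,0) l" by (simp add: mem_pend)
    ultimately show ?thesis by auto
  qed
  have n2: "core_edge k 2 \<notin> insert (pendant_edge k (0,1) m) ?P"
  proof -
    have "(2,1) \<in> core_edge k 2" using k3 by (simp add: mem_core)
    moreover have "(2,1) \<notin> pendant_edge k (0,1) m" using m3 by (simp add: mem_pend)
    moreover have "\<forall>l\<in>{3..<m}. (2,1) \<notin> pendant_edge k (0,0) l" by (simp add: mem_pend)
    ultimately show ?thesis by auto
  qed
  have n3: "pendant_edge k (0,1) m \<notin> ?P"
  proof -
    have "(0,1) \<in> pendant_edge k (0,1) m" by (simp add: mem_pend)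
    moreover have "\<forall>l\<in>{3..<m}. (0,1) \<notin> pendant_edge k (0,0) l" by (simp add: mem_pend)
    ultimately show ?thesis by auto
  qed
  show ?thesis unfolding hyperF_eq m[symmetric]
    using n1 n2 n3 inj by (simp add: sum.reindex add.assoc)
qed

lemma hyperF_fin: "finite (hyperF k n)" unfolding hyperF_eq by simp

lemma hyperF_unif: assumes k3: "3 \<le> k" and m3: "3 \<le> n div (k-1)"
  shows "e \<in> hyperF k n \<Longrightarrow> finite e \<and> card e = k"
  unfolding hyperF_eq using k3 m3 by (auto simp: core_fin pend_fin core_card pend_card)

lemma hyperF_verts:
  assumes "(a,b) \<in> hverts (hyperF k n)" and m: "m = n div (k-1)" and m3: "3 \<le> m"
  shows "(a = 0 \<and> b = 0) \<or> (a = 0 \<and> b = 1) \<or> ((a = 1 \<or> a = 2) \<and> 1 \<le> b \<and> b \<le> k-2)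
       \<or> (3 \<le> a \<and> a < m \<and> 1 \<le> b \<and> b \<le> k-1) \<or> (a = m \<and> 1 \<le> b \<and> b \<le> k-1)"
  using assms unfolding hverts_def hyperF_eq m[symmetric] by (auto simp: mem_core mem_pend)




definition xFv :: "nat \<Rightarrow> real \<Rightarrow> real \<Rightarrow> real \<Rightarrow> real \<Rightarrow> real \<Rightarrow> nat \<times> nat \<Rightarrow> real" where
  "xFv m x1 x2 xc xp xq v = (if fst v = 0 then (if snd v = 0 then x1 else x2) else if fst v \<le> 2 then xc
      else if fst v < m then xp else xq)"

lemma F_eig:
  fixes s x1 x2 xc xp xq :: real
  assumes k3: "3 \<le> k" and m3: "3 \<le> m" and m: "m = n div (k-1)"
    and d: "d = real k - 1" and t: "t = real m - 2"
    and nz: "x1 \<noteq> 0"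
    and E1: "2*x2 + 2*(d-1)*xc + (t-1)*d*xp = s*x1"
    and E2: "2*x1 + 2*(d-1)*xc + d*xq = s*x2"
    and E3: "x1 + x2 + (d-2)*xc = s*xc"
    and E4: "x1 + (d-1)*xp = s*xp"
    and E5: "x2 + (d-1)*xq = s*xq"
  shows "heigenvalue (hyperF k n) (complex_of_real (s/d))"
proof -
  let ?E = "hyperF k n"
  let ?V = "hverts ?E"
  define x where "x = xFv m x1 x2 xc xp xq"
  have dpos: "0 < d" using d k3 by simp
  have unif: "\<And>e. e \<in> ?E \<Longrightarrow> finite e \<and> card e = k" using hyperF_unif k3 m3 m by blast
  have rs: "(\<Sum>j\<in>?V. hadj ?E i j * x j) = (1/d) * (\<Sum>e\<in>?E. if i \<in> e then (\<Sum>j\<in>e. x j) - x i else 0)" for i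
    using row_sum[OF hyperF_fin unif, where i=i and x=x] d by simp
  have Sc: "(\<Sum>j\<in>core_edge k l. x j) = x1 + x2 + (d-1)*xc" if "l = 1 \<or> l = 2" for l
  proof -
    have "(\<Sum>b=1..k-2. x (l,b)) = real (k-2) * xc" using that by (intro sum_const_on) (auto simp: x_def xFv_def)
    then show ?thesis using that k3 d by (subst sum_core) (auto simp: x_def xFv_def of_nat_diff)
  qed
  have Sp: "(\<Sum>j\<in>pendant_edge k (0,0) l. x j) = x1 + d*xp" if "3 \<le> l" "l < m" for l
  proof -
    have "(\<Sum>b=1..k-1. x (l,b)) = real (k-1) * xp" using that by (intro sum_const_on) (auto simp: x_def xFv_def)
    then show ?thesis using that k3 d by (subst sum_pend) (auto simp: x_def xFv_def of_nat_diff)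
  qed
  have Sq: "(\<Sum>j\<in>pendant_edge k (0,1) m. x j) = x2 + d*xq"
  proof -
    have "(\<Sum>b=1..k-1. x (m,b)) = real (k-1) * xq" using m3 by (intro sum_const_on) (auto simp: x_def xFv_def)
    then show ?thesis using m3 k3 d by (subst sum_pend) (auto simp: x_def xFv_def of_nat_diff)
  qed
  let ?g = "\<lambda>i e. if i \<in> e then (\<Sum>j\<in>e. x j) - x i else 0"
  have pl: "(\<Sum>l\<in>{3..<m}. ?g i (pendant_edge k (0,0) l)) = (\<Sum>l\<in>{3..<m}. if i \<in> pendant_edge k (0,0) l then x1 + d*xp - x i else 0)" for i
    using Sp by (intro sum.cong) auto
  have main: "(\<Sum>j\<in>?V. hadj ?E i j * x j) = (s/d) * x i" if iV: "i \<in> ?V" for i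
  proof -
    obtain a b where ab: "i = (a,b)" by fastforce
    have cls: "(a = 0 \<and> b = 0) \<or> (a = 0 \<and> b = 1) \<or> (a = 1 \<and> 1 \<le> b \<and> b \<le> k-2) \<or> (a = 2 \<and> 1 \<le> b \<and> b \<le> k-2)
       \<or> (3 \<le> a \<and> a < m \<and> 1 \<le> b \<and> b \<le> k-1) \<or> (a = m \<and> 1 \<le> b \<and> b \<le> k-1)"
      using hyperF_verts[of a b k n m] iV ab m m3 by auto
    have T: "(\<Sum>e\<in>?E. ?g i e) = s * x i"
    proof -
      have dec: "(\<Sum>e\<in>?E. ?g i e) = ?g i (core_edge k 1) + ?g i (core_edge k 2) + ?g i (pendant_edge k (0,1) m)
          + (\<Sum>l\<in>{3..<m}. if i \<in> pendant_edge k (0,0) l then x1 + d*xp - x i else 0)"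
        using hyperF_sum[OF k3 m3 m, of "?g i"] pl by simp
      have ring1: "(x2 + (d-1)*xc) + (x2 + (d-1)*xc) + 0 + (t-1)*(d*xp) = 2*x2 + 2*(d-1)*xc + (t-1)*d*xp" by algebra
      have ring2: "(x1 + (d-1)*xc) + (x1 + (d-1)*xc) + d*xq + 0 = 2*x1 + 2*(d-1)*xc + d*xq" by algebra
      have ring3: "(x1 + x2 + (d-1)*xc - xc) + 0 + 0 + 0 = x1 + x2 + (d-2)*xc" by algebra
      have ring3': "0 + (x1 + x2 + (d-1)*xc - xc) + 0 + 0 = x1 + x2 + (d-2)*xc" by algebra
      have ring4: "0 + 0 + 0 + (x1 + d*xp - xp) = x1 + (d-1)*xp" by algebra
      have ring5: "0 + 0 + (x2 + d*xq - xq) + 0 = x2 + (d-1)*xq" by algebra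
      from cls show ?thesis
      proof (elim disjE conjE)
        assume "a = 0" "b = 0"
        then have i: "i = (0,0)" using ab by simp
        have xi: "x i = x1" using i by (simp add: x_def xFv_def)
        have g1: "?g i (core_edge k 1) = x2 + (d-1)*xc" using Sc[of 1] i xi by (simp add: mem_core)
        have g2: "?g i (core_edge k 2) = x2 + (d-1)*xc" using Sc[of 2] i xi by (simp add: mem_core)
        have g3: "?g i (pendant_edge k (0,1) m) = 0" using i by (simp add: mem_pend)
        have rm: "real (m-3) = t - 1" using m3 t by (simp add: of_nat_diff)
        have gs: "(\<Sum>l\<in>{3..<m}. if i \<in> pendant_edge k (0,0) l then x1 + d*xp - x i else 0) = (t-1) * (d*xp)"
          using i xi rm by (simp add: mem_pend)
        show ?thesis unfolding dec g1 g2 g3 gs ring1 E1 using xi by simp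
      next
        assume "a = 0" "b = 1"
        then have i: "i = (0,1)" using ab by simp
        have xi: "x i = x2" using i by (simp add: x_def xFv_def)
        have g1: "?g i (core_edge k 1) = x1 + (d-1)*xc" using Sc[of 1] i xi by (simp add: mem_core)
        have g2: "?g i (core_edge k 2) = x1 + (d-1)*xc" using Sc[of 2] i xi by (simp add: mem_core)
        have g3: "?g i (pendant_edge k (0,1) m) = d*xq" using Sq i xi by (simp add: mem_pend)
        have gs: "(\<Sum>l\<in>{3..<m}. if i \<in> pendant_edge k (0,0) l then x1 + d*xp - x i else 0) = 0"
          using i by (simp add: mem_pend)
        show ?thesis unfolding dec g1 g2 g3 gs ring2 E2 using xi by simp
      next
        assume a1: "a = 1" and b: "1 \<le> b" "b \<le> k-2"
        have xi: "x i = xc" using ab a1 by (auto simp: x_def xFv_def)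
        have g3: "?g i (pendant_edge k (0,1) m) = 0" using ab a1 b m3 by (auto simp: mem_pend)
        have gs: "(\<Sum>l\<in>{3..<m}. if i \<in> pendant_edge k (0,0) l then x1 + d*xp - x i else 0) = 0"
          using ab a1 b by (intro sum.neutral) (auto simp: mem_pend)
        have g1: "?g i (core_edge k 1) = x1 + x2 + (d-1)*xc - xc" using Sc[of 1] ab a1 b xi by (simp add: mem_core)
        have g2: "?g i (core_edge k 2) = 0" using ab a1 b by (simp add: mem_core)
        show ?thesis unfolding dec g1 g2 g3 gs ring3 E3 using xi by simp
      next
        assume a2: "a = 2" and b: "1 \<le> b" "b \<le> k-2"
        have xi: "x i = xc" using ab a2 by (auto simp: x_def xFv_def)
        have g3: "?g i (pendant_edge k (0,1) m) = 0" using ab a2 b m3 by (auto simp: mem_pend)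
        have gs: "(\<Sum>l\<in>{3..<m}. if i \<in> pendant_edge k (0,0) l then x1 + d*xp - x i else 0) = 0"
          using ab a2 b by (intro sum.neutral) (auto simp: mem_pend)
        have g1: "?g i (core_edge k 1) = 0" using ab a2 b by (simp add: mem_core)
        have g2: "?g i (core_edge k 2) = x1 + x2 + (d-1)*xc - xc" using Sc[of 2] ab a2 b xi by (simp add: mem_core)
        show ?thesis unfolding dec g1 g2 g3 gs ring3' E3 using xi by simp
      next
        assume a: "3 \<le> a" "a < m" and b: "1 \<le> b" "b \<le> k-1"
        have xi: "x i = xp" using ab a by (auto simp: x_def xFv_def)
        have g1: "?g i (core_edge k 1) = 0" "?g i (core_edge k 2) = 0" using ab a by (auto simp: mem_core)
        have g3: "?g i (pendant_edge k (0,1) m) = 0" using ab a by (auto simp: mem_pend)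
        have "(\<Sum>l\<in>{3..<m}. if i \<in> pendant_edge k (0,0) l then x1 + d*xp - x i else 0)
            = (\<Sum>l\<in>{3..<m}. if l = a then x1 + d*xp - xp else 0)"
          using ab a b xi by (intro sum.cong) (auto simp: mem_pend)
        also have "\<dots> = x1 + d*xp - xp" using a by (simp add: sum.delta)
        finally have gs: "(\<Sum>l\<in>{3..<m}. if i \<in> pendant_edge k (0,0) l then x1 + d*xp - x i else 0) = x1 + d*xp - xp" .
        show ?thesis unfolding dec g1 g3 gs ring4 E4 using xi by simp
      next
        assume a: "a = m" and b: "1 \<le> b" "b \<le> k-1"
        have xi: "x i = xq" using ab a m3 by (auto simp: x_def xFv_def)
        have g1: "?g i (core_edge k 1) = 0" "?g i (core_edge k 2) = 0" using ab a m3 by (auto simp: mem_core)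
        have g3: "?g i (pendant_edge k (0,1) m) = x2 + d*xq - xq" using Sq ab a b xi by (simp add: mem_pend)
        have gs: "(\<Sum>l\<in>{3..<m}. if i \<in> pendant_edge k (0,0) l then x1 + d*xp - x i else 0) = 0"
          using ab a by (intro sum.neutral) (auto simp: mem_pend)
        show ?thesis unfolding dec g1 g3 gs ring5 E5 using xi by simp
      qed
    qed
    show ?thesis unfolding rs T using dpos by simp
  qed
  show ?thesis unfolding heigenvalue_def
  proof (intro exI conjI ballI)
    have "(0,0) \<in> core_edge k 1" by (simp add: mem_core)
    then have "(0,0) \<in> ?V" unfolding hverts_def hyperF_eq by blast
    then show "\<exists>i\<in>?V. complex_of_real (x i) \<noteq> 0" using nz by (intro bexI[of _ "(0,0)"]) (auto simp: x_def xFv_def)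
    fix i assume "i \<in> ?V"
    have "(\<Sum>j\<in>?V. complex_of_real (hadj ?E i j) * complex_of_real (x j)) = complex_of_real (\<Sum>j\<in>?V. hadj ?E i j * x j)"
      by simp
    also have "\<dots> = complex_of_real (s/d) * complex_of_real (x i)" using main[OF \<open>i \<in> ?V\<close>] by simp
    finally show "(\<Sum>j\<in>?V. complex_of_real (hadj ?E i j) * complex_of_real (x j)) = complex_of_real (s/d) * complex_of_real (x i)" .
  qed
qed



lemma hyperF1_eq: "hyperF1 k n = insert (core_edge k 1) (insert (core_edge k 2)
   (pendant_edge k (2,1) ` {3..n div (k-1)}))"
  unfolding hyperF1_def hypercycle2_def Let_def by auto

lemma hyperF1_sum:
  assumes k3: "3 \<le> k" and m: "m = n div (k-1)"
  shows "(\<Sum>e\<in>hyperF1 k n. g e) = g (core_edge k 1) + g (core_edge k 2)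
          + (\<Sum>l\<in>{3..m}. g (pendant_edge k (2,1) l))"
proof -
  let ?P = "pendant_edge k (2,1) ` {3..m}"
  have inj: "inj_on (pendant_edge k (2,1)) {3..m}"
  proof (rule inj_onI)
    fix l l' assume "l \<in> {3..m}" "l' \<in> {3..m}" "pendant_edge k (2,1) l = pendant_edge k (2,1) l'"
    moreover have "(l,1) \<in> pendant_edge k (2,1) l" using k3 by (auto simp: mem_pend)
    ultimately have "(l,1) \<in> pendant_edge k (2,1) l'" by simp
    then show "l = l'" using \<open>l \<in> {3..m}\<close> by (simp add: mem_pend)
  qed
  have n1: "core_edge k 1 \<notin> insert (core_edge k 2) ?P"
  proof -
    have "(1,1) \<in> core_edge k 1" using k3 by (simp add: mem_core)
    moreover have "(1,1) \<notin> core_edge k 2" by (simp add: mem_core)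
    moreover have "\<forall>l\<in>{3..m}. (1,1) \<notin> pendant_edge k (2,1) l" by (simp add: mem_pend)
    ultimately show ?thesis by auto
  qed
  have n2: "core_edge k 2 \<notin> ?P"
  proof -
    have "(0,0) \<in> core_edge k 2" by (simp add: mem_core)
    moreover have "\<forall>l\<in>{3..m}. (0,0) \<notin> pendant_edge k (2,1) l" by (simp add: mem_pend)
    ultimately show ?thesis by auto
  qed
  show ?thesis unfolding hyperF1_eq m[symmetric]
    using n1 n2 inj by (simp add: sum.reindex add.assoc)
qed

lemma hyperF1_fin: "finite (hyperF1 k n)" unfolding hyperF1_eq by simp

lemma hyperF1_unif: assumes k3: "3 \<le> k"
  shows "e \<in> hyperF1 k n \<Longrightarrow> finite e \<and> card e = k"
  unfolding hyperF1_eq using k3 by (auto simp: core_fin pend_fin core_card pend_card)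

lemma hyperF1_verts:
  assumes "(a,b) \<in> hverts (hyperF1 k n)" and m: "m = n div (k-1)"
  shows "(a = 0 \<and> b = 0) \<or> (a = 0 \<and> b = 1) \<or> (a = 1 \<and> 1 \<le> b \<and> b \<le> k-2)
       \<or> (a = 2 \<and> b = 1) \<or> (a = 2 \<and> 2 \<le> b \<and> b \<le> k-2)
       \<or> (3 \<le> a \<and> a \<le> m \<and> 1 \<le> b \<and> b \<le> k-1)"
  using assms unfolding hverts_def hyperF1_eq m[symmetric] by (auto simp: mem_core mem_pend)

definition yv :: "real \<Rightarrow> real \<Rightarrow> real \<Rightarrow> real \<Rightarrow> nat \<times> nat \<Rightarrow> real" where
  "yv c1 c2 h p v = (if fst v = 0 then 1 else if fst v = 1 then c1 else if fst v = 2 then (if snd v = 1 then h else c2) else p)"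

lemma F1_super:
  fixes s c1 c2 h p :: real
  assumes k3: "3 \<le> k" and m3: "3 \<le> m" and m: "m = n div (k-1)"
    and d: "d = real k - 1" and t: "t = real m - 2"
    and pos: "0 < c1" "0 < c2" "0 < h" "0 < p"
    and I1: "2 + (d-1)*c1 + (d-2)*c2 + h < s"
    and I2: "2 + (d-2)*c1 < s*c1"
    and I3: "2 + (d-2)*c2 + t*d*p < s*h"
    and I4: "2 + h + (d-3)*c2 < s*c2"
    and I5: "h + (d-1)*p < s*p"
    and iV: "i \<in> hverts (hyperF1 k n)"
  shows "(\<Sum>j\<in>hverts (hyperF1 k n). hadj (hyperF1 k n) i j * yv c1 c2 h p j) < (s/d) * yv c1 c2 h p i"
proof -
  let ?E = "hyperF1 k n"
  let ?V = "hverts ?E"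
  define y where "y = yv c1 c2 h p"
  have dpos: "0 < d" using d k3 by simp
  have unif: "\<And>e. e \<in> ?E \<Longrightarrow> finite e \<and> card e = k" using hyperF1_unif k3 by blast
  have rs: "(\<Sum>j\<in>?V. hadj ?E i j * y j) = (1/d) * (\<Sum>e\<in>?E. if i \<in> e then (\<Sum>j\<in>e. y j) - y i else 0)"
    using row_sum[OF hyperF1_fin unif, where i=i and x=y] d by simp
  have S1: "(\<Sum>j\<in>core_edge k 1. y j) = 2 + (d-1)*c1"
  proof -
    have "(\<Sum>b=1..k-2. y (1,b)) = real (k-2) * c1" by (intro sum_const_on) (auto simp: y_def yv_def)
    then show ?thesis using k3 d by (subst sum_core) (auto simp: y_def yv_def of_nat_diff)
  qed
  have S2: "(\<Sum>j\<in>core_edge k 2. y j) = 2 + h + (d-2)*c2"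
  proof -
    have "{1..k-2} = insert 1 {2..k-2}" using k3 by auto
    then have "(\<Sum>b=1..k-2. y (2,b)) = y (2,1) + (\<Sum>b=2..k-2. y (2,b))" by simp
    also have "(\<Sum>b=2..k-2. y (2,b)) = (\<Sum>b=2..k-2. c2)" by (intro sum.cong) (auto simp: y_def yv_def)
    also have "\<dots> = real (k-3) * c2" using k3 by simp
    finally have "(\<Sum>b=1..k-2. y (2,b)) = h + (d-2)*c2" using k3 d by (simp add: y_def yv_def of_nat_diff)
    then show ?thesis by (subst sum_core) (auto simp: y_def yv_def)
  qed
  have Sp: "(\<Sum>j\<in>pendant_edge k (2,1) l. y j) = h + d*p" if "3 \<le> l" for l
  proof -
    have "(\<Sum>b=1..k-1. y (l,b)) = real (k-1) * p" using that by (intro sum_const_on) (auto simp: y_def yv_def)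
    then show ?thesis using that k3 d by (subst sum_pend) (auto simp: y_def yv_def of_nat_diff)
  qed
  let ?g = "\<lambda>e. if i \<in> e then (\<Sum>j\<in>e. y j) - y i else 0"
  have pl: "(\<Sum>l\<in>{3..m}. ?g (pendant_edge k (2,1) l)) = (\<Sum>l\<in>{3..m}. if i \<in> pendant_edge k (2,1) l then h + d*p - y i else 0)"
    using Sp by (intro sum.cong) auto
  have dec: "(\<Sum>e\<in>?E. ?g e) = ?g (core_edge k 1) + ?g (core_edge k 2)
          + (\<Sum>l\<in>{3..m}. if i \<in> pendant_edge k (2,1) l then h + d*p - y i else 0)"
    using hyperF1_sum[OF k3 m, of ?g] pl by simp
  obtain a b where ab: "i = (a,b)" by fastforce
  have cls: "(a = 0 \<and> b = 0) \<or> (a = 0 \<and> b = 1) \<or> (a = 1 \<and> 1 \<le> b \<and> b \<le> k-2)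
       \<or> (a = 2 \<and> b = 1) \<or> (a = 2 \<and> 2 \<le> b \<and> b \<le> k-2)
       \<or> (3 \<le> a \<and> a \<le> m \<and> 1 \<le> b \<and> b \<le> k-1)"
    using hyperF1_verts[of a b k n m] iV ab m by auto
  have T: "(\<Sum>e\<in>?E. ?g e) < s * y i"
    using cls
  proof (elim disjE conjE)
    assume "a = 0" "b = 0"
    then have i: "i = (0,0)" using ab by simp
    have yi: "y i = 1" using i by (simp add: y_def yv_def)
    have g1: "?g (core_edge k 1) = 1 + (d-1)*c1" using S1 i yi by (simp add: mem_core)
    have g2: "?g (core_edge k 2) = 1 + h + (d-2)*c2" using S2 i yi by (simp add: mem_core)
    have gs: "(\<Sum>l\<in>{3..m}. if i \<in> pendant_edge k (2,1) l then h + d*p - y i else 0) = 0"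
      using i by (simp add: mem_pend)
    show ?thesis unfolding dec g1 g2 gs using I1 yi by simp
  next
    assume "a = 0" "b = 1"
    then have i: "i = (0,1)" using ab by simp
    have yi: "y i = 1" using i by (simp add: y_def yv_def)
    have g1: "?g (core_edge k 1) = 1 + (d-1)*c1" using S1 i yi by (simp add: mem_core)
    have g2: "?g (core_edge k 2) = 1 + h + (d-2)*c2" using S2 i yi by (simp add: mem_core)
    have gs: "(\<Sum>l\<in>{3..m}. if i \<in> pendant_edge k (2,1) l then h + d*p - y i else 0) = 0"
      using i by (simp add: mem_pend)
    show ?thesis unfolding dec g1 g2 gs using I1 yi by simp
  next
    assume a: "a = 1" and b: "1 \<le> b" "b \<le> k-2"
    have yi: "y i = c1" using ab a by (simp add: y_def yv_def)
    have g1: "?g (core_edge k 1) = 2 + (d-2)*c1" using S1 ab a b yi by (simp add: mem_core algebra_simps)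
    have g2: "?g (core_edge k 2) = 0" using ab a b by (simp add: mem_core)
    have gs: "(\<Sum>l\<in>{3..m}. if i \<in> pendant_edge k (2,1) l then h + d*p - y i else 0) = 0"
      using ab a by (intro sum.neutral) (auto simp: mem_pend)
    show ?thesis unfolding dec g1 g2 gs using I2 yi by simp
  next
    assume a: "a = 2" "b = 1"
    then have i: "i = (2,1)" using ab by simp
    have yi: "y i = h" using i by (simp add: y_def yv_def)
    have g1: "?g (core_edge k 1) = 0" using i by (simp add: mem_core)
    have g2: "?g (core_edge k 2) = 2 + (d-2)*c2" proof -
      have "1 \<le> k-2" using k3 by simp
      then show ?thesis using S2 i yi by (simp add: mem_core)
    qed
    have rm: "real (card {3..m}) = t" using m3 t by (simp add: of_nat_diff)
    have gs: "(\<Sum>l\<in>{3..m}. if i \<in> pendant_edge k (2,1) l then h + d*p - y i else 0) = t*d*p"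
      using i yi rm by (simp add: mem_pend)
    show ?thesis unfolding dec g1 g2 gs using I3 yi by simp
  next
    assume a: "a = 2" and b: "2 \<le> b" "b \<le> k-2"
    have yi: "y i = c2" using ab a b by (simp add: y_def yv_def)
    have g1: "?g (core_edge k 1) = 0" using ab a by (simp add: mem_core)
    have g2: "?g (core_edge k 2) = 2 + h + (d-3)*c2" using S2 ab a b yi by (simp add: mem_core algebra_simps)
    have gs: "(\<Sum>l\<in>{3..m}. if i \<in> pendant_edge k (2,1) l then h + d*p - y i else 0) = 0"
      using ab a b by (intro sum.neutral) (auto simp: mem_pend)
    show ?thesis unfolding dec g1 g2 gs using I4 yi by simp
  next
    assume a: "3 \<le> a" "a \<le> m" and b: "1 \<le> b" "b \<le> k-1"
    have yi: "y i = p" using ab a by (simp add: y_def yv_def)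
    have g1: "?g (core_edge k 1) = 0" "?g (core_edge k 2) = 0" using ab a by (auto simp: mem_core)
    have "(\<Sum>l\<in>{3..m}. if i \<in> pendant_edge k (2,1) l then h + d*p - y i else 0)
        = (\<Sum>l\<in>{3..m}. if l = a then h + d*p - p else 0)"
      using ab a b yi by (intro sum.cong) (auto simp: mem_pend)
    also have "\<dots> = h + d*p - p" using a by (simp add: sum.delta)
    finally have gs: "(\<Sum>l\<in>{3..m}. if i \<in> pendant_edge k (2,1) l then h + d*p - y i else 0) = h + d*p - p" .
    show ?thesis unfolding dec g1 gs using I5 yi by (simp add: algebra_simps)
  qed
  show ?thesis using T dpos unfolding rs y_def[symmetric] by (simp add: divide_simps mult.commute)
qed




lemma F_lower:
  assumes k3: "3 \<le> k" and m3: "3 \<le> n div (k-1)" and ev: "heigenvalue (hyperF k n) (complex_of_real r)" and r0: "0 \<le> r"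
  shows "r \<le> hspec_rad (hyperF k n)"
proof -
  let ?E = "hyperF k n"
  let ?V = "hverts ?E"
  have unif: "\<And>e. e \<in> ?E \<Longrightarrow> finite e \<and> card e = k" using hyperF_unif k3 m3 by blast
  have finV: "finite ?V" unfolding hverts_def using hyperF_fin unif by blast
  have nn: "\<And>i j. 0 \<le> hadj ?E i j" using unif k3 by (intro hadj_nonneg[of _ k]) auto
  define B0 where "B0 = (\<Sum>i\<in>?V. \<Sum>j\<in>?V. hadj ?E i j)"
  have bd: "cmod mu \<le> B0" if "heigenvalue ?E mu" for mu
  proof (rule cw_bound[OF finV nn, of "\<lambda>_. 1"])
    fix i assume i: "i \<in> ?V"
    have "(\<Sum>j\<in>?V. hadj ?E i j) \<le> B0" unfolding B0_def
      using finV i nn by (intro member_le_sum) (auto intro: sum_nonneg)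
    then show "(\<Sum>j\<in>?V. hadj ?E i j * 1) \<le> B0 * 1" by simp
  qed (use that in auto)
  have "bdd_above {cmod mu | mu. heigenvalue ?E mu}" by (rule bdd_aboveI[where M=B0]) (auto intro: bd)
  moreover have "r \<in> {cmod mu | mu. heigenvalue ?E mu}" using ev r0 by force
  ultimately show ?thesis unfolding hspec_rad_def by (intro cSup_upper) simp_all
qed

lemma F1_upper:
  assumes k3: "3 \<le> k" and m3: "3 \<le> m" and m: "m = n div (k-1)"
    and ypos: "\<And>i. 0 < y i"
    and sup: "\<And>i. i \<in> hverts (hyperF1 k n) \<Longrightarrow> (\<Sum>j\<in>hverts (hyperF1 k n). hadj (hyperF1 k n) i j * y j) < r * y i"
  shows "hspec_rad (hyperF1 k n) < r"
proof -
  let ?E = "hyperF1 k n"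
  let ?V = "hverts ?E"
  have unif: "\<And>e. e \<in> ?E \<Longrightarrow> finite e \<and> card e = k" using hyperF1_unif k3 by blast
  have finV: "finite ?V" unfolding hverts_def using hyperF1_fin unif by blast
  have nn: "\<And>i j. 0 \<le> hadj ?E i j" using unif k3 by (intro hadj_nonneg[of _ k]) auto
  have a: "(3,1) \<in> ?V" and b: "(3,2) \<in> ?V"
    using k3 m3 unfolding hverts_def hyperF1_eq m[symmetric]
    by (auto simp: mem_pend intro!: bexI[of _ "pendant_edge k (2,1) 3"])
  have neV: "?V \<noteq> {}" using a by blast
  define R where "R = (\<lambda>i. (\<Sum>j\<in>?V. hadj ?E i j * y j) / y i)"
  define B where "B = Max (R ` ?V)"
  have RB: "R i \<le> B" if "i \<in> ?V" for i unfolding B_def using finV that by (intro Max_ge) auto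
  have Br: "B < r" unfolding B_def using finV neV
  proof (subst Max_less_iff)
    show "\<forall>x\<in>R ` ?V. x < r"
    proof
      fix x assume "x \<in> R ` ?V"
      then obtain i where i: "i \<in> ?V" "x = R i" by blast
      show "x < r" using sup[OF i(1)] ypos[of i] i(2) unfolding R_def by (simp add: divide_less_eq)
    qed
  qed auto
  have bd: "cmod mu \<le> B" if "heigenvalue ?E mu" for mu
  proof (rule cw_bound[OF finV nn, of y])
    fix i assume i: "i \<in> ?V"
    have "R i \<le> B" using RB i by blast
    then show "(\<Sum>j\<in>?V. hadj ?E i j * y j) \<le> B * y i" using ypos[of i] unfolding R_def by (simp add: divide_le_eq)
  qed (use that ypos in auto)
  have tw: "heigenvalue ?E (- complex_of_real (hadj ?E (3,1) (3,2)))"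
  proof (rule twins_eig[OF finV a b])
    fix e assume "e \<in> ?E"
    then show "((3,1) \<in> e) = ((3,2) \<in> e)" using k3 unfolding hyperF1_eq m[symmetric]
      by (auto simp: mem_core mem_pend)
  qed simp
  have ne: "{cmod mu | mu. heigenvalue ?E mu} \<noteq> {}" using tw by blast
  have "hspec_rad ?E \<le> B" unfolding hspec_rad_def using ne bd by (auto intro!: cSup_least)
  then show ?thesis using Br by simp
qed

theorem lemma3p7:
  fixes k n :: nat
  assumes "k \<ge> 3" and "(k - 1) dvd n" and "n div (k - 1) \<ge> 3"
  shows "hspec_rad (hyperF1 k n) < hspec_rad (hyperF k n)"
proof -
  have k3: "3 \<le> k" using assms by simp
  define m where "m = n div (k-1)"
  have m3: "3 \<le> m" using assms m_def by simp
  define d where "d = real k - 1"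
  define t where "t = real m - 2"
  have dd: "d = 2 \<or> 3 \<le> d" using k3 d_def by (cases "k = 3") auto
  have t1: "1 \<le> t" using m3 t_def by simp
  have dpos: "0 < d" using dd by auto
  obtain s where spos: "0 < s" and Fp: "\<exists>x1 x2 xc xp xq. x1 \<noteq> 0 \<and>
      2*x2 + 2*(d-1)*xc + (t-1)*d*xp = s*x1 \<and>
      2*x1 + 2*(d-1)*xc + d*xq = s*x2 \<and>
      x1 + x2 + (d-2)*xc = s*xc \<and>
      x1 + (d-1)*xp = s*xp \<and>
      x2 + (d-1)*xq = s*xq" and F1p: "\<exists>c1 c2 h p. 0<c1 \<and> 0<c2 \<and> 0<h \<and> 0<p \<and>
      2 + (d-1)*c1 + (d-2)*c2 + h < s \<and>
      2 + (d-2)*c1 < s*c1 \<and>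
      2 + (d-2)*c2 + t*d*p < s*h \<and>
      2 + h + (d-3)*c2 < s*c2 \<and>
      h + (d-1)*p < s*p"
    using numeric[OF dd t1] by blast
  from Fp obtain x1 x2 xc xp xq where X: "x1 \<noteq> 0"
      "2*x2 + 2*(d-1)*xc + (t-1)*d*xp = s*x1"
      "2*x1 + 2*(d-1)*xc + d*xq = s*x2"
      "x1 + x2 + (d-2)*xc = s*xc"
      "x1 + (d-1)*xp = s*xp"
      "x2 + (d-1)*xq = s*xq" by blast
  from F1p obtain c1 c2 h p where C: "0<c1" "0<c2" "0<h" "0<p"
      "2 + (d-1)*c1 + (d-2)*c2 + h < s"
      "2 + (d-2)*c1 < s*c1"
      "2 + (d-2)*c2 + t*d*p < s*h"
      "2 + h + (d-3)*c2 < s*c2"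
      "h + (d-1)*p < s*p" by blast
  have ev: "heigenvalue (hyperF k n) (complex_of_real (s/d))"
    using F_eig[OF k3 m3 m_def d_def t_def X] .
  have low: "s/d \<le> hspec_rad (hyperF k n)"
    using F_lower[OF k3 _ ev] m3 m_def spos dpos by simp
  have ypos: "\<And>i. 0 < yv c1 c2 h p i" using C by (simp add: yv_def)
  have up: "hspec_rad (hyperF1 k n) < s/d"
    using F1_upper[OF k3 m3 m_def ypos F1_super[OF k3 m3 m_def d_def t_def C]] .
  show ?thesis using low up by simp
qed

end
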